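(* In the deterministic tandem system TSC(RO) with $n$ jobs, suppose there are nonnegative reals $\Gamma^j_{\min}(k),\Gamma^j_{\max}(k)$, $\Gamma_{\min}(k),\Gamma_{\max}(k)$ ($1\le j\le J$, $1\le k\le n$) such that the nonnegative interarrival and service times satisfy, for all $k=1,\dots,n$, $$\Gamma^j_{\min}(k)\le\sum_{i=k}^nV^j_i\le\Gamma^j_{\max}(k),\qquad \Gamma_{\min}(k)\le\sum_{i=k}^nU_i\le\Gamma_{\max}(k).$$ With the convention $\Gamma^j_{\min}(n+1)=\Gamma_{\min}(n+1)=0$, the sojourn time of job $n$ satisfies $$W_n\le\max_{n\ge k_J\ge\dots\ge k_1\ge1}\ \sum_{j=1}^{J-1}\big(\Gamma^j_{\max}(k_j)-\Gamma^j_{\min}(k_{j+1}+1)\big)+\Gamma^J_{\max}(k_J)-\Gamma_{\min}(k_1+1).$$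
   Context: TSC(RO): servers $S_1,\dots,S_J$ in tandem, initially empty, $n$ jobs; job $i$ arrives to $S_1$ at time $\sum_{l=1}^iU_l$; each server is FIFO, work-conserving, with infinite buffer; job $i$ needs service $V^j_i\ge0$ at $S_j$, then joins $S_{j+1}$, leaving after $S_J$. $W_n$ is the time between job $n$'s arrival at $S_1$ and its service completion at $S_J$. *)

theory Defs
  imports Main "HOL-Library.Extended_Real"
begin

text \<open>Jobs are indexed 1,2,...; servers 1..J.
  U l = interarrival time of job l; V j i = service requirement of job i at server j.
  arr U i = arrival time of job i at S_1 = sum of U_1..U_i.
  dep U V j i = service completion time of job i at server S_j (dep U V 0 i = arr U i).
  FIFO, work-conserving, infinite buffer: job i starts service at S_j when it has
  left S_(j-1) and job i-1 has left S_j (Lindley recursion).\<close>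

definition arr :: "(nat \<Rightarrow> real) \<Rightarrow> nat \<Rightarrow> real" where
  "arr U i = (\<Sum>l = 1..i. U l)"

fun dep :: "(nat \<Rightarrow> real) \<Rightarrow> (nat \<Rightarrow> nat \<Rightarrow> real) \<Rightarrow> nat \<Rightarrow> nat \<Rightarrow> real" where
  "dep U V 0 i = arr U i"
| "dep U V (Suc j) 0 = 0"
| "dep U V (Suc j) (Suc i) =
     (if i = 0 then dep U V j 1 else max (dep U V (Suc j) i) (dep U V j (Suc i)))
     + V (Suc j) (Suc i)"

definition sojourn :: "(nat \<Rightarrow> real) \<Rightarrow> (nat \<Rightarrow> nat \<Rightarrow> real) \<Rightarrow> nat \<Rightarrow> nat \<Rightarrow> real" where
  "sojourn U V J i = dep U V J i - arr U i"

end

theory Submission imports Defs "HOL-Library.FuncSet" begin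

definition pv :: "(nat \<Rightarrow> real) \<Rightarrow> (nat \<Rightarrow> nat \<Rightarrow> real) \<Rightarrow> nat \<Rightarrow> (nat \<Rightarrow> nat) \<Rightarrow> real" where
  "pv U V j k = arr U (k 1) + (\<Sum>l = 1..j. \<Sum>m = k l..k (Suc l). V l m)"

lemma path:
  assumes "1 \<le> i"
  shows "\<exists>k. k (Suc j) = i \<and> (\<forall>l\<in>{1..Suc j}. 1 \<le> k l \<and> k l \<le> i)
           \<and> (\<forall>l\<in>{1..j}. k l \<le> k (Suc l)) \<and> dep U V j i = pv U V j k"
  using assms
proof (induction j arbitrary: i)
  case 0
  show ?case by (rule exI[of _ "\<lambda>_. i"]) (use 0 in \<open>auto simp: pv_def\<close>)
next
  case (Suc j)
  show ?case using Suc.prems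
  proof (induction i rule: dec_induct)
    case base
    obtain k where k: "k (Suc j) = 1" "\<forall>l\<in>{1..Suc j}. 1 \<le> k l \<and> k l \<le> 1"
      "\<forall>l\<in>{1..j}. k l \<le> k (Suc l)" "dep U V j 1 = pv U V j k"
      using Suc.IH[of 1] by auto
    define k' where "k' = k(Suc (Suc j) := 1)"
    have s: "(\<Sum>l = 1..j. \<Sum>m = k' l..k' (Suc l). V l m) = (\<Sum>l = 1..j. \<Sum>m = k l..k (Suc l). V l m)"
      unfolding k'_def by (rule sum.cong) auto
    have "dep U V (Suc j) 1 = pv U V (Suc j) k'"
      using k s by (simp add: pv_def k'_def)
    moreover have "k' (Suc (Suc j)) = 1 \<and> (\<forall>l\<in>{1..Suc (Suc j)}. 1 \<le> k' l \<and> k' l \<le> 1)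
           \<and> (\<forall>l\<in>{1..Suc j}. k' l \<le> k' (Suc l))"
      using k by (auto simp: k'_def le_Suc_eq)
    ultimately show ?case by blast
  next
    case (step i)
    have d: "dep U V (Suc j) (Suc i) = max (dep U V (Suc j) i) (dep U V j (Suc i)) + V (Suc j) (Suc i)"
      using step.hyps by simp
    show ?case
    proof (cases "dep U V (Suc j) i \<ge> dep U V j (Suc i)")
      case True
      obtain k where k: "k (Suc (Suc j)) = i" "\<forall>l\<in>{1..Suc (Suc j)}. 1 \<le> k l \<and> k l \<le> i"
        "\<forall>l\<in>{1..Suc j}. k l \<le> k (Suc l)" "dep U V (Suc j) i = pv U V (Suc j) k"
        using step.IH by auto
      define k' where "k' = k(Suc (Suc j) := Suc i)"
      have s: "(\<Sum>l = 1..j. \<Sum>m = k' l..k' (Suc l). V l m) = (\<Sum>l = 1..j. \<Sum>m = k l..k (Suc l). V l m)"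
        unfolding k'_def by (rule sum.cong) auto
      have ki: "k (Suc j) \<le> i" using k(1) k(3)[rule_format, of "Suc j"] by simp
      have e1: "pv U V (Suc j) k' = arr U (k 1) + (\<Sum>l=1..j. \<Sum> m=k l..k(Suc l). V l m) + (\<Sum>m = k(Suc j)..Suc i. V (Suc j) m)"
        using s by (simp add: pv_def k'_def)
      have e2: "pv U V (Suc j) k = arr U (k 1) + (\<Sum>l=1..j. \<Sum> m=k l..k(Suc l). V l m) + (\<Sum>m = k(Suc j)..i. V (Suc j) m)"
        using k(1) by (simp add: pv_def)
      have e3: "(\<Sum>m = k(Suc j)..Suc i. V (Suc j) m) = (\<Sum>m = k(Suc j)..i. V (Suc j) m) + V (Suc j) (Suc i)"
        using ki by simp
      have "dep U V (Suc j) (Suc i) = pv U V (Suc j) k'"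
        using e1 e2 e3 k(4) True d by simp
      moreover have "k' (Suc (Suc j)) = Suc i \<and> (\<forall>l\<in>{1..Suc (Suc j)}. 1 \<le> k' l \<and> k' l \<le> Suc i)
           \<and> (\<forall>l\<in>{1..Suc j}. k' l \<le> k' (Suc l))"
        using k by (auto simp: k'_def le_Suc_eq)
      ultimately show ?thesis by blast
    next
      case False
      obtain k where k: "k (Suc j) = Suc i" "\<forall>l\<in>{1..Suc j}. 1 \<le> k l \<and> k l \<le> Suc i"
        "\<forall>l\<in>{1..j}. k l \<le> k (Suc l)" "dep U V j (Suc i) = pv U V j k"
        using Suc.IH[of "Suc i"] by auto
      define k' where "k' = k(Suc (Suc j) := Suc i)"
      have s: "(\<Sum>l = 1..j. \<Sum>m = k' l..k' (Suc l). V l m) = (\<Sum>l = 1..j. \<Sum>m = k l..k (Suc l). V l m)"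
        unfolding k'_def by (rule sum.cong) auto
      have "dep U V (Suc j) (Suc i) = pv U V (Suc j) k'"
        using k s False d by (simp add: pv_def k'_def)
      moreover have "k' (Suc (Suc j)) = Suc i \<and> (\<forall>l\<in>{1..Suc (Suc j)}. 1 \<le> k' l \<and> k' l \<le> Suc i)
           \<and> (\<forall>l\<in>{1..Suc j}. k' l \<le> k' (Suc l))"
        using k by (auto simp: k'_def le_Suc_eq)
      ultimately show ?thesis by blast
    qed
  qed
qed
lemma split_sum:
  fixes f :: "nat \<Rightarrow> real"
  assumes "b \<le> n" "a \<le> Suc b"
  shows "sum f {a..n} = sum f {a..b} + sum f {Suc b..n}"
  using assms(1)
proof (induction n rule: dec_induct)
  case base then show ?case by simp
next
  case (step m) then show ?case using assms(2) by simp
qed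

theorem theorem3:
  fixes U :: "nat \<Rightarrow> real" and V :: "nat \<Rightarrow> nat \<Rightarrow> real"
    and Gjmin Gjmax :: "nat \<Rightarrow> nat \<Rightarrow> real" and Gmin Gmax :: "nat \<Rightarrow> real"
    and J n :: nat
  assumes "J \<ge> 1" and "n \<ge> 1"
    and U_nn: "\<And>l. 1 \<le> l \<Longrightarrow> l \<le> n \<Longrightarrow> U l \<ge> 0"
    and V_nn: "\<And>j i. 1 \<le> j \<Longrightarrow> j \<le> J \<Longrightarrow> 1 \<le> i \<Longrightarrow> i \<le> n \<Longrightarrow> V j i \<ge> 0"
    and G_nn: "\<And>j k. 1 \<le> j \<Longrightarrow> j \<le> J \<Longrightarrow> 1 \<le> k \<Longrightarrow> k \<le> n \<Longrightarrow>
                   Gjmin j k \<ge> 0 \<and> Gjmax j k \<ge> 0"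
    and G_nn': "\<And>k. 1 \<le> k \<Longrightarrow> k \<le> n \<Longrightarrow> Gmin k \<ge> 0 \<and> Gmax k \<ge> 0"
    and V_bounds: "\<And>j k. 1 \<le> j \<Longrightarrow> j \<le> J \<Longrightarrow> 1 \<le> k \<Longrightarrow> k \<le> n \<Longrightarrow>
                   Gjmin j k \<le> (\<Sum>i = k..n. V j i) \<and> (\<Sum>i = k..n. V j i) \<le> Gjmax j k"
    and U_bounds: "\<And>k. 1 \<le> k \<Longrightarrow> k \<le> n \<Longrightarrow>
                   Gmin k \<le> (\<Sum>i = k..n. U i) \<and> (\<Sum>i = k..n. U i) \<le> Gmax k"
    and conv_j: "\<And>j. 1 \<le> j \<Longrightarrow> j \<le> J \<Longrightarrow> Gjmin j (n + 1) = 0"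
    and conv: "Gmin (n + 1) = 0"
  shows "sojourn U V J n \<le>
    Max { (\<Sum>j = 1..J - 1. Gjmax j (k j) - Gjmin j (k (j + 1) + 1))
            + Gjmax J (k J) - Gmin (k 1 + 1)
          | k :: nat \<Rightarrow> nat.
            (\<forall>j \<in> {1..J}. 1 \<le> k j \<and> k j \<le> n) \<and> (\<forall>j \<in> {1..<J}. k j \<le> k (j + 1)) }"
proof -
  define T where "T = (\<lambda>k::nat\<Rightarrow>nat. (\<Sum>j = 1..J - 1. Gjmax j (k j) - Gjmin j (k (j + 1) + 1))
            + Gjmax J (k J) - Gmin (k 1 + 1))"
  define P where "P = (\<lambda>k::nat\<Rightarrow>nat. (\<forall>j \<in> {1..J}. 1 \<le> k j \<and> k j \<le> n) \<and> (\<forall>j \<in> {1..<J}. k j \<le> k (j + 1)))"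
  have Seq: "{ (\<Sum>j = 1..J - 1. Gjmax j (k j) - Gjmin j (k (j + 1) + 1))
            + Gjmax J (k J) - Gmin (k 1 + 1)
          | k :: nat \<Rightarrow> nat.
            (\<forall>j \<in> {1..J}. 1 \<le> k j \<and> k j \<le> n) \<and> (\<forall>j \<in> {1..<J}. k j \<le> k (j + 1)) }
        = {T k | k. P k}" unfolding T_def P_def by simp
  have fin: "finite {T k | k. P k}"
  proof (rule finite_subset)
    show "{T k | k. P k} \<subseteq> T ` (PiE {1..J} (\<lambda>_. {0..n}))"
    proof
      fix y assume "y \<in> {T k | k. P k}"
      then obtain k where y: "y = T k" and Pk: "P k" by auto
      have "restrict k {1..J} \<in> PiE {1..J} (\<lambda>_. {0..n})" using Pk by (auto simp: P_def)
      moreover have "T (restrict k {1..J}) = T k"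
        unfolding T_def using \<open>J \<ge> 1\<close>
        by (intro arg_cong2[where f="(-)"] arg_cong2[where f="(+)"] sum.cong) auto
      ultimately show "y \<in> T ` (PiE {1..J} (\<lambda>_. {0..n}))" using y by (metis image_eqI)
    qed
    show "finite (T ` (PiE {1..J} (\<lambda>_. {0..n})))" by (intro finite_imageI finite_PiE) auto
  qed
  obtain k where k: "k (Suc J) = n" "\<forall>l\<in>{1..Suc J}. 1 \<le> k l \<and> k l \<le> n"
     "\<forall>l\<in>{1..J}. k l \<le> k (Suc l)" "dep U V J n = pv U V J k"
    using path[of n J U V] \<open>n \<ge> 1\<close> by auto
  have Pk: "P k" using k unfolding P_def by auto
  define SV where "SV = (\<lambda>l a. \<Sum>m = a..n. V l m)"
  have hU: "arr U (k 1) - arr U n \<le> - Gmin (k 1 + 1)"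
  proof -
    have k1: "1 \<le> k 1" "k 1 \<le> n" using k(2) by auto
    have "arr U n = arr U (k 1) + (\<Sum>m = Suc (k 1)..n. U m)"
      unfolding arr_def using split_sum[of "k 1" n 1 U] k1 by simp
    moreover have "Gmin (k 1 + 1) \<le> (\<Sum>m = Suc (k 1)..n. U m)"
    proof (cases "k 1 = n")
      case True then show ?thesis using conv by simp
    next
      case False then show ?thesis using U_bounds[of "Suc (k 1)"] k1 by simp
    qed
    ultimately show ?thesis by simp
  qed
  have hV: "(\<Sum>m = k l..k (Suc l). V l m) \<le> Gjmax l (k l) - Gjmin l (k (l + 1) + 1)"
    if l: "l \<in> {1..J}" for l
  proof -
    have kl: "1 \<le> k l" "k l \<le> k (Suc l)" "k (Suc l) \<le> n" using k(2,3) l by auto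
    have "SV l (k l) = (\<Sum>m = k l..k (Suc l). V l m) + SV l (Suc (k (Suc l)))"
      unfolding SV_def using split_sum[of "k (Suc l)" n "k l" "V l"] kl by simp
    moreover have "Gjmin l (k (l + 1) + 1) \<le> SV l (Suc (k (Suc l)))"
    proof (cases "k (Suc l) = n")
      case True then show ?thesis using conv_j[of l] l by (simp add: SV_def)
    next
      case False then show ?thesis using V_bounds[of l "Suc (k (Suc l))"] kl l by (simp add: SV_def)
    qed
    moreover have "SV l (k l) \<le> Gjmax l (k l)" using V_bounds[of l "k l"] kl l by (simp add: SV_def)
    ultimately show ?thesis by simp
  qed
  have hVJ: "(\<Sum>m = k J..k (Suc J). V J m) \<le> Gjmax J (k J)"
    using V_bounds[of J "k J"] k(1,2) \<open>J \<ge> 1\<close> by simp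
  obtain J' where Jeq: "J = Suc J'" using \<open>J \<ge> 1\<close> by (cases J) auto
  have "(\<Sum>l = 1..J. \<Sum>m = k l..k (Suc l). V l m)
      = (\<Sum>l = 1..J - 1. \<Sum>m = k l..k (Suc l). V l m) + (\<Sum>m = k J..k (Suc J). V J m)"
    by (simp add: Jeq)
  also have "\<dots> \<le> (\<Sum>l = 1..J - 1. Gjmax l (k l) - Gjmin l (k (l + 1) + 1)) + Gjmax J (k J)"
    by (intro add_mono sum_mono hV hVJ) auto
  finally have hS: "(\<Sum>l = 1..J. \<Sum>m = k l..k (Suc l). V l m)
      \<le> (\<Sum>l = 1..J - 1. Gjmax l (k l) - Gjmin l (k (l + 1) + 1)) + Gjmax J (k J)" .
  have "sojourn U V J n \<le> T k"
    using hS hU k(4) unfolding sojourn_def pv_def T_def by simp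
  also have "T k \<le> Max {T k | k. P k}"
    using fin Pk by (intro Max_ge) auto
  finally show ?thesis using Seq by simp
qed
end
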